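(* Let $A_1$ and $A_2$ be two Jordan-Lie algebras, either both classical or both quantum (see context), and suppose $A_1$ has a Casimir element $C$, i.e. $[C,a]=0$ for all $a\in A_1$. Suppose there is a linear map $\phi: A_1\to A_1\otimes A_2$ which is a Jordan-Lie algebra homomorphism: $$[\phi(a),\phi(b)]=\phi([a,b]),\qquad \phi(a\circ b)=\phi(a)\circ\phi(b)\qquad \forall a,b\in A_1 .$$ Fix an integer $N\ge 2$ and define recursively $\phi^{(2)}=\phi$ and $$\phi^{(i)}=(\phi^{(2)}\otimes \underbrace{id\otimes\cdots\otimes id}_{i-2})\circ\phi^{(i-1)},\qquad i=3,\dots,N,$$ so that $\phi^{(i)}:A_1\to A_1\otimes \underbrace{A_2\otimes\cdots\otimes A_2}_{i-1}$. For $i=2,\dots,N$ set $$C^{(i)}=\phi^{(i)}(C)\otimes\underbrace{1\otimes\cdots\otimes 1}_{N-i}\in A_1\otimes\underbrace{A_2\otimes\cdots\otimes A_2}_{N-1}.$$ Then the elements $C^{(2)},\dots,C^{(N)}$ pairwise commute in $A_1\otimes A_2^{\otimes(N-1)}$, i.e. $[C^{(i)},C^{(j)}]=0$ for all $2\le i,j\le N$. Moreover, $[\phi^{(N)}(a),C^{(i)}]=0$ for all $a\in A_1$ and all $i=2,\dots,N$.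
   Context: A generalized Jordan-Lie algebra is a vector space $\mathcal A$ (with unit $1$) equipped with two bilinear operations $\circ$ and $[\cdot,\cdot]$ with values in $\mathcal A$ such that for all $a,b,c$: $(a\circ b)\circ c=a\circ(b\circ c)$; $[a,b]=-[b,a]$; $[a,[b,c]]+[c,[a,b]]+[b,[c,a]]=0$; and $[a,b\circ c]=b\circ[a,c]+[a,b]\circ c$. A classical Jordan-Lie algebra (CJL) is one in which $\circ$ is commutative (e.g. a Poisson algebra of functions with pointwise product and Poisson bracket); a quantum Jordan-Lie algebra (QJL) is one in which $[a,b]=a\circ b-b\circ a$. For two such algebras $A,B$ (both CJL or both QJL), $A\otimes B$ is again such an algebra with $(a\otimes b)\circ(a'\otimes b')=(a\circ a')\otimes(b\circ b')$ and $[a\otimes b,a'\otimes b']=[a,a']\otimes (b\circ b')+(a'\circ a)\otimes[b,b']$; iterated tensor products are given this structure. Products/brackets of elements are written without subscripts indicating the space. *)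

theory Defs
  imports Complex_Main "HOL-Library.Poly_Mapping"
begin

definition bilin :: "('a::real_vector \<Rightarrow> 'a \<Rightarrow> 'a) \<Rightarrow> bool" where
  "bilin f \<longleftrightarrow> (\<forall>x. linear (f x)) \<and> (\<forall>y. linear (\<lambda>x. f x y))"

definition gen_JL :: "('a::real_vector \<Rightarrow> 'a \<Rightarrow> 'a) \<Rightarrow> ('a \<Rightarrow> 'a \<Rightarrow> 'a) \<Rightarrow> 'a \<Rightarrow> bool" where
  "gen_JL circ br e \<longleftrightarrow>
     bilin circ \<and> bilin br \<and>
     (\<forall>a. circ e a = a \<and> circ a e = a) \<and>
     (\<forall>a b c. circ (circ a b) c = circ a (circ b c)) \<and>
     (\<forall>a b. br a b = - br b a) \<and>
     (\<forall>a b c. br a (br b c) + br c (br a b) + br b (br c a) = 0) \<and>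
     (\<forall>a b c. br a (circ b c) = circ b (br a c) + circ (br a b) c)"

definition CJL :: "('a::real_vector \<Rightarrow> 'a \<Rightarrow> 'a) \<Rightarrow> ('a \<Rightarrow> 'a \<Rightarrow> 'a) \<Rightarrow> 'a \<Rightarrow> bool" where
  "CJL circ br e \<longleftrightarrow> gen_JL circ br e \<and> (\<forall>a b. circ a b = circ b a)"

definition QJL :: "('a::real_vector \<Rightarrow> 'a \<Rightarrow> 'a) \<Rightarrow> ('a \<Rightarrow> 'a \<Rightarrow> 'a) \<Rightarrow> 'a \<Rightarrow> bool" where
  "QJL circ br e \<longleftrightarrow> gen_JL circ br e \<and> (\<forall>a b. br a b = circ a b - circ b a)"

instantiation poly_mapping :: (type, real_vector) real_vector
begin
lift_definition scaleR_poly_mapping :: "real \<Rightarrow> ('a \<Rightarrow>\<^sub>0 'b) \<Rightarrow> ('a \<Rightarrow>\<^sub>0 'b)"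
  is "\<lambda>r f k. r *\<^sub>R f k"
  by (erule finite_subset[rotated]) auto
instance
  by standard (transfer; auto simp: scaleR_add_right scaleR_add_left)+
end

text \<open>A formal linear combination of symbols (a, [b1,...,bk]) stands for
  a \<otimes> b1 \<otimes> ... \<otimes> bk.  The quotient is the direct sum over k of
  A \<otimes> B^(\<otimes>k).\<close>

type_synonym ('a,'b) formal = "('a \<times> 'b list) \<Rightarrow>\<^sub>0 real"

definition sym1 :: "'a \<Rightarrow> 'b list \<Rightarrow> ('a,'b) formal" where
  "sym1 a bs = Poly_Mapping.single (a, bs) 1"

inductive_set nullsp :: "('a::real_vector, 'b::real_vector) formal set" where
  zero: "0 \<in> nullsp"
| add: "f \<in> nullsp \<Longrightarrow> g \<in> nullsp \<Longrightarrow> f + g \<in> nullsp"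
| scale: "f \<in> nullsp \<Longrightarrow> r *\<^sub>R f \<in> nullsp"
| addA: "sym1 (a + a') bs - sym1 a bs - sym1 a' bs \<in> nullsp"
| scaleA: "sym1 (r *\<^sub>R a) bs - r *\<^sub>R sym1 a bs \<in> nullsp"
| addB: "i < length bs \<Longrightarrow>
     sym1 a (bs[i := b + b']) - sym1 a (bs[i := b]) - sym1 a (bs[i := b']) \<in> nullsp"
| scaleB: "i < length bs \<Longrightarrow>
     sym1 a (bs[i := r *\<^sub>R b]) - r *\<^sub>R sym1 a (bs[i := b]) \<in> nullsp"

definition tens_rel :: "('a::real_vector, 'b::real_vector) formal \<Rightarrow> ('a, 'b) formal \<Rightarrow> bool" where
  "tens_rel f g \<longleftrightarrow> f - g \<in> nullsp"

lemma nullsp_uminus: "f \<in> nullsp \<Longrightarrow> - f \<in> nullsp"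
  using nullsp.scale[of f "-1"] by (metis scaleR_minus1_left)

lemma equivp_tens_rel: "equivp tens_rel"
proof (rule equivpI)
  show "reflp tens_rel" by (rule reflpI) (simp add: tens_rel_def nullsp.zero)
  show "symp tens_rel" unfolding tens_rel_def
  proof (rule sympI)
    fix f g
    assume "f - g \<in> nullsp"
    then have "- (f - g) \<in> nullsp" by (rule nullsp_uminus)
    then show "g - f \<in> nullsp" by simp
  qed
  show "transp tens_rel" unfolding tens_rel_def
  proof (rule transpI)
    fix f g h
    assume "f - g \<in> nullsp" "g - h \<in> nullsp"
    then have "(f - g) + (g - h) \<in> nullsp" by (rule nullsp.add)
    then show "f - h \<in> nullsp" by simp
  qed
qed

quotient_type (overloaded) ('a, 'b) tensor = "('a::real_vector, 'b::real_vector) formal" / tens_rel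
  by (rule equivp_tens_rel)

instantiation tensor :: (real_vector, real_vector) real_vector
begin
lift_definition zero_tensor :: "('a,'b) tensor" is "0" .
lift_definition plus_tensor :: "('a,'b) tensor \<Rightarrow> ('a,'b) tensor \<Rightarrow> ('a,'b) tensor" is "(+)"
proof -
  fix f f' g g' :: "('a,'b) formal"
  assume "tens_rel f f'" "tens_rel g g'"
  then have "(f - f') + (g - g') \<in> nullsp" unfolding tens_rel_def by (rule nullsp.add)
  moreover have "(f - f') + (g - g') = (f + g) - (f' + g')" by (simp add: algebra_simps)
  ultimately show "tens_rel (f + g) (f' + g')" unfolding tens_rel_def by metis
qed
lift_definition uminus_tensor :: "('a,'b) tensor \<Rightarrow> ('a,'b) tensor" is "uminus"
proof -
  fix f f' :: "('a,'b) formal"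
  assume "tens_rel f f'"
  then have "- (f - f') \<in> nullsp" unfolding tens_rel_def by (rule nullsp_uminus)
  moreover have "- (f - f') = (- f) - (- f')" by (simp add: algebra_simps)
  ultimately show "tens_rel (- f) (- f')" unfolding tens_rel_def by metis
qed
lift_definition minus_tensor :: "('a,'b) tensor \<Rightarrow> ('a,'b) tensor \<Rightarrow> ('a,'b) tensor" is "(-)"
proof -
  fix f f' g g' :: "('a,'b) formal"
  assume "tens_rel f f'" "tens_rel g g'"
  then have "(f - f') + - (g - g') \<in> nullsp" unfolding tens_rel_def
    by (intro nullsp.add nullsp_uminus)
  moreover have "(f - f') + - (g - g') = (f - g) - (f' - g')" by (simp add: algebra_simps)
  ultimately show "tens_rel (f - g) (f' - g')" unfolding tens_rel_def by metis
qed
lift_definition scaleR_tensor :: "real \<Rightarrow> ('a,'b) tensor \<Rightarrow> ('a,'b) tensor" is "scaleR"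
proof -
  fix r and f f' :: "('a,'b) formal"
  assume "tens_rel f f'"
  then have "r *\<^sub>R (f - f') \<in> nullsp" unfolding tens_rel_def by (rule nullsp.scale)
  then show "tens_rel (r *\<^sub>R f) (r *\<^sub>R f')" unfolding tens_rel_def
    by (simp add: scaleR_diff_right)
qed

lemma tens_rel_refl: "tens_rel f f"
  by (simp add: tens_rel_def nullsp.zero)

instance
proof
  fix a b c :: "('a,'b) tensor" and r s :: real
  show "a + b + c = a + (b + c)" by transfer (simp add: add.assoc tens_rel_refl)
  show "a + b = b + a" by transfer (simp add: add.commute tens_rel_refl)
  show "0 + a = a" by transfer (simp add: tens_rel_refl)
  show "- a + a = 0" by transfer (simp add: tens_rel_refl)
  show "a - b = a + - b" by transfer (simp add: tens_rel_refl)
  show "r *\<^sub>R (a + b) = r *\<^sub>R a + r *\<^sub>R b" by transfer (simp add: scaleR_add_right tens_rel_refl)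
  show "(r + s) *\<^sub>R a = r *\<^sub>R a + s *\<^sub>R a" by transfer (simp add: scaleR_add_left tens_rel_refl)
  show "r *\<^sub>R s *\<^sub>R a = (r * s) *\<^sub>R a" by transfer (simp add: tens_rel_refl)
  show "1 *\<^sub>R a = a" by transfer (simp add: tens_rel_refl)
qed
end

definition pure :: "'a::real_vector \<Rightarrow> 'b::real_vector list \<Rightarrow> ('a,'b) tensor" where
  "pure a bs = abs_tensor (sym1 a bs)"

definition tgrade :: "nat \<Rightarrow> ('a::real_vector, 'b::real_vector) tensor set" where
  "tgrade k = {abs_tensor f | f. \<forall>x \<in> Poly_Mapping.keys f. length (snd x) = k}"

text \<open>Linear extension of a map given on pure tensors (well defined when the map is
  multilinear, which is the case for all uses below).\<close>
definition tensor_ext :: "('a::real_vector \<Rightarrow> 'b::real_vector list \<Rightarrow> 'c::real_vector)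
    \<Rightarrow> ('a,'b) tensor \<Rightarrow> 'c" where
  "tensor_ext g t = (\<Sum>x \<in> Poly_Mapping.keys (rep_tensor t). Poly_Mapping.lookup (rep_tensor t) x *\<^sub>R g (fst x) (snd x))"

definition tensor_ext2 :: "('a::real_vector \<Rightarrow> 'b::real_vector list \<Rightarrow> 'a \<Rightarrow> 'b list \<Rightarrow> 'c::real_vector)
    \<Rightarrow> ('a,'b) tensor \<Rightarrow> ('a,'b) tensor \<Rightarrow> 'c" where
  "tensor_ext2 h s t = tensor_ext (\<lambda>a bs. tensor_ext (\<lambda>a' bs'. h a bs a' bs') t) s"

definition tensor_right :: "('a::real_vector,'b::real_vector) tensor \<Rightarrow> 'b list \<Rightarrow> ('a,'b) tensor" where
  "tensor_right t bs = tensor_ext (\<lambda>a cs. pure a (cs @ bs)) t"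

definition tcirc :: "('a::real_vector \<Rightarrow> 'a \<Rightarrow> 'a) \<Rightarrow> ('b::real_vector \<Rightarrow> 'b \<Rightarrow> 'b)
    \<Rightarrow> ('a,'b) tensor \<Rightarrow> ('a,'b) tensor \<Rightarrow> ('a,'b) tensor" where
  "tcirc circ1 circ2 = tensor_ext2 (\<lambda>a bs a' bs'.
      if length bs = length bs' then pure (circ1 a a') (map2 circ2 bs bs') else 0)"

text \<open>Bracket on pure tensors, iterated as (A \<otimes> B \<otimes> ... \<otimes> B) \<otimes> B:
  [X \<otimes> b, X' \<otimes> b'] = [X,X'] \<otimes> (b \<circ> b') + (X' \<circ> X) \<otimes> [b,b'].
  The lists are given in reversed order (last tensor factor first).\<close>
fun pbr_rev :: "('a::real_vector \<Rightarrow> 'a \<Rightarrow> 'a) \<Rightarrow> ('a \<Rightarrow> 'a \<Rightarrow> 'a)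
    \<Rightarrow> ('b::real_vector \<Rightarrow> 'b \<Rightarrow> 'b) \<Rightarrow> ('b \<Rightarrow> 'b \<Rightarrow> 'b)
    \<Rightarrow> 'a \<Rightarrow> 'b list \<Rightarrow> 'a \<Rightarrow> 'b list \<Rightarrow> ('a,'b) tensor" where
  "pbr_rev circ1 br1 circ2 br2 a [] a' [] = pure (br1 a a') []"
| "pbr_rev circ1 br1 circ2 br2 a (b # rs) a' (b' # rs') =
     (if length rs = length rs' then
        tensor_right (pbr_rev circ1 br1 circ2 br2 a rs a' rs') [circ2 b b']
        + pure (circ1 a' a) (rev (map2 circ2 rs' rs) @ [br2 b b'])
      else 0)"
| "pbr_rev circ1 br1 circ2 br2 a _ a' _ = 0"

definition tbr :: "('a::real_vector \<Rightarrow> 'a \<Rightarrow> 'a) \<Rightarrow> ('a \<Rightarrow> 'a \<Rightarrow> 'a)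
    \<Rightarrow> ('b::real_vector \<Rightarrow> 'b \<Rightarrow> 'b) \<Rightarrow> ('b \<Rightarrow> 'b \<Rightarrow> 'b)
    \<Rightarrow> ('a,'b) tensor \<Rightarrow> ('a,'b) tensor \<Rightarrow> ('a,'b) tensor" where
  "tbr circ1 br1 circ2 br2 = tensor_ext2 (\<lambda>a bs a' bs'.
      pbr_rev circ1 br1 circ2 br2 a (rev bs) a' (rev bs'))"

definition phi_id :: "('a::real_vector \<Rightarrow> ('a, 'b::real_vector) tensor) \<Rightarrow> ('a,'b) tensor \<Rightarrow> ('a,'b) tensor" where
  "phi_id \<phi> = tensor_ext (\<lambda>a bs. tensor_right (\<phi> a) bs)"

primrec phi_aux :: "('a::real_vector \<Rightarrow> ('a, 'b::real_vector) tensor) \<Rightarrow> nat \<Rightarrow> 'a \<Rightarrow> ('a,'b) tensor" where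
  "phi_aux \<phi> 0 = \<phi>"
| "phi_aux \<phi> (Suc k) = phi_id \<phi> \<circ> phi_aux \<phi> k"

definition phi_sup :: "('a::real_vector \<Rightarrow> ('a, 'b::real_vector) tensor) \<Rightarrow> nat \<Rightarrow> 'a \<Rightarrow> ('a,'b) tensor" where
  "phi_sup \<phi> i = phi_aux \<phi> (i - 2)"

definition Cas :: "('a::real_vector \<Rightarrow> ('a, 'b::real_vector) tensor) \<Rightarrow> 'b \<Rightarrow> 'a \<Rightarrow> nat \<Rightarrow> nat \<Rightarrow> ('a,'b) tensor" where
  "Cas \<phi> e2 C N i = tensor_right (phi_sup \<phi> i C) (replicate (N - i) e2)"

end

theory Submission
  imports Defs
begin

abbreviation lk where "lk \<equiv> Poly_Mapping.lookup"
abbreviation ks where "ks \<equiv> Poly_Mapping.keys"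

definition lin :: "('a::real_vector \<Rightarrow> 'b::real_vector list \<Rightarrow> 'c::real_vector) \<Rightarrow> ('a,'b) formal \<Rightarrow> 'c" where
  "lin g f = (\<Sum>x\<in>ks f. lk f x *\<^sub>R g (fst x) (snd x))"

lemma lin_superset: assumes "finite S" "ks f \<subseteq> S"
  shows "lin g f = (\<Sum>x\<in>S. lk f x *\<^sub>R g (fst x) (snd x))"
  unfolding lin_def
  by (rule sum.mono_neutral_left) (use assms in \<open>auto simp: in_keys_iff\<close>)

lemma lin_add: "lin g (f + f') = lin g f + lin g f'"
proof -
  let ?S = "ks f \<union> ks f'"
  have fin: "finite ?S" by simp
  have "ks (f+f') \<subseteq> ?S" by (rule keys_add)
  then show ?thesis
    using lin_superset[OF fin, of "f+f'" g] lin_superset[OF fin, of f g] lin_superset[OF fin, of f' g]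
    by (simp add: lookup_add scaleR_add_left sum.distrib)
qed

lemma lin_scale: "lin g (r *\<^sub>R f) = r *\<^sub>R lin g f"
proof -
  have fin: "finite (ks f)" by simp
  have "ks (r *\<^sub>R f) \<subseteq> ks f" by (auto simp: in_keys_iff scaleR_poly_mapping.rep_eq)
  then show ?thesis
    using lin_superset[OF fin, of "r *\<^sub>R f" g] lin_superset[OF fin, of f g]
    by (simp add: scaleR_poly_mapping.rep_eq scaleR_sum_right)
qed

lemma lin_diff: "lin g (f - f') = lin g f - lin g f'"
proof -
  let ?S = "ks f \<union> ks f'"
  have fin: "finite ?S" by simp
  have "ks (f-f') \<subseteq> ?S" by (auto simp: in_keys_iff lookup_minus)
  then show ?thesis
    using lin_superset[OF fin, of "f-f'" g] lin_superset[OF fin, of f g] lin_superset[OF fin, of f' g]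
    by (simp add: lookup_minus scaleR_diff_left sum_subtractf)
qed

lemma lin_zero: "lin g 0 = 0"
  by (simp add: lin_def)

lemma lin_sym1: "lin g (sym1 a bs) = g a bs"
  by (simp add: lin_def sym1_def)

definition mlin :: "('a::real_vector \<Rightarrow> 'b::real_vector list \<Rightarrow> 'c::real_vector) \<Rightarrow> bool" where
  "mlin g \<longleftrightarrow> (\<forall>bs. linear (\<lambda>a. g a bs)) \<and> (\<forall>a bs i. i < length bs \<longrightarrow> linear (\<lambda>b. g a (bs[i:=b])))"

lemma lin_null: assumes "mlin g" and "f \<in> nullsp" shows "lin g f = 0"
  using assms(2)
proof induction
  case zero then show ?case by (simp add: lin_zero)
next
  case (add f g) then show ?case by (simp add: lin_add)
next
  case (scale f r) then show ?case by (simp add: lin_scale)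
next
  case (addA a a' bs)
  have "linear (\<lambda>a. g a bs)" using assms(1) by (simp add: mlin_def)
  from linear_add[OF this, of a a'] show ?case by (simp add: lin_diff lin_sym1)
next
  case (scaleA r a bs)
  have "linear (\<lambda>a. g a bs)" using assms(1) by (simp add: mlin_def)
  from linear_cmul[OF this, of r a] show ?case by (simp add: lin_diff lin_sym1 lin_scale)
next
  case (addB i bs a b b')
  have "linear (\<lambda>b. g a (bs[i:=b]))" using assms(1) addB by (simp add: mlin_def)
  from linear_add[OF this, of b b'] show ?case by (simp add: lin_diff lin_sym1)
next
  case (scaleB i bs a r b)
  have "linear (\<lambda>b. g a (bs[i:=b]))" using assms(1) scaleB by (simp add: mlin_def)
  from linear_cmul[OF this, of r b] show ?case by (simp add: lin_diff lin_sym1 lin_scale)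
qed

lemma ext_rep: "tensor_ext g t = lin g (rep_tensor t)"
  by (simp add: tensor_ext_def lin_def)

lemma ext_abs: assumes "mlin g" shows "tensor_ext g (abs_tensor f) = lin g f"
proof -
  have "tens_rel (rep_tensor (abs_tensor f)) f"
    by (rule Quotient3_rep_abs[OF Quotient3_tensor tens_rel_refl])
  then have "rep_tensor (abs_tensor f) - f \<in> nullsp" by (simp add: tens_rel_def)
  then have "lin g (rep_tensor (abs_tensor f) - f) = 0" by (rule lin_null[OF assms])
  then show ?thesis by (simp add: ext_rep lin_diff)
qed

lemma abs_rep: "abs_tensor (rep_tensor t) = t"
  by (rule Quotient3_abs_rep[OF Quotient3_tensor])

lemma ext_linear: assumes "mlin g" shows "linear (tensor_ext g)"
proof (rule linearI)
  fix s t :: "('a,'b) tensor"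
  have "s + t = abs_tensor (rep_tensor s + rep_tensor t)"
    by (metis abs_rep plus_tensor.abs_eq)
  then have "tensor_ext g (s + t) = lin g (rep_tensor s + rep_tensor t)"
    using ext_abs[OF assms] by metis
  then show "tensor_ext g (s + t) = tensor_ext g s + tensor_ext g t"
    by (simp add: lin_add ext_rep)
next
  fix r and t :: "('a,'b) tensor"
  have "r *\<^sub>R t = abs_tensor (r *\<^sub>R rep_tensor t)"
    by (metis abs_rep scaleR_tensor.abs_eq)
  then have "tensor_ext g (r *\<^sub>R t) = lin g (r *\<^sub>R rep_tensor t)"
    using ext_abs[OF assms] by metis
  then show "tensor_ext g (r *\<^sub>R t) = r *\<^sub>R tensor_ext g t"
    by (simp add: lin_scale ext_rep)
qed

lemma ext_pure: assumes "mlin g" shows "tensor_ext g (pure a bs) = g a bs"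
  by (simp add: pure_def ext_abs[OF assms] lin_sym1)

lemma abs_linear: "linear abs_tensor"
  by (rule linearI) (simp_all add: plus_tensor.abs_eq scaleR_tensor.abs_eq)

lemma formal_expand: "f = (\<Sum>x\<in>ks f. lk f x *\<^sub>R sym1 (fst x) (snd x))"
proof (rule poly_mapping_eqI)
  fix k
  have "lk (\<Sum>x\<in>ks f. lk f x *\<^sub>R sym1 (fst x) (snd x)) k
       = (\<Sum>x\<in>ks f. lk f x * (1 when x = k))"
    by (simp add: lookup_sum scaleR_poly_mapping.rep_eq sym1_def lookup_single)
  also have "\<dots> = (\<Sum>x\<in>ks f. if k = x then lk f x else 0)"
    by (rule sum.cong) (auto simp: when_def)
  also have "\<dots> = lk f k"
    by (simp add: sum.delta in_keys_iff)
  finally show "lk f k = lk (\<Sum>x\<in>ks f. lk f x *\<^sub>R sym1 (fst x) (snd x)) k" by simp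
qed

lemma abs_expand: "abs_tensor f = lin pure f"
proof -
  have "abs_tensor f = abs_tensor (\<Sum>x\<in>ks f. lk f x *\<^sub>R sym1 (fst x) (snd x))"
    using formal_expand by metis
  also have "\<dots> = lin pure f"
    by (simp add: linear_sum[OF abs_linear] linear_cmul[OF abs_linear] lin_def pure_def)
  finally show ?thesis .
qed

lemma lin_linear_map: assumes "linear F" shows "F (lin g f) = lin (\<lambda>a bs. F (g a bs)) f"
  by (simp add: lin_def linear_sum[OF assms] linear_cmul[OF assms])

lemma linear_via_pure: assumes "linear F" shows "F t = tensor_ext (\<lambda>a bs. F (pure a bs)) t"
proof -
  have "F t = F (lin pure (rep_tensor t))" by (metis abs_expand abs_rep)
  then show ?thesis by (simp add: lin_linear_map[OF assms] ext_rep)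
qed

lemma linear_eq_pure: assumes "linear F" "linear G" "\<And>a bs. F (pure a bs) = G (pure a bs)"
  shows "F t = G t"
  using linear_via_pure[OF assms(1), of t] linear_via_pure[OF assms(2), of t] assms(3) by simp

lemma lin_param_linear: assumes "\<And>a bs. linear (\<lambda>y. G y a bs)"
  shows "linear (\<lambda>y. lin (G y) f)"
  unfolding lin_def
  by (rule linear_compose_sum) (auto intro!: module_hom_scale assms)

lemma ext_param_linear: assumes "\<And>a bs. linear (\<lambda>y. G y a bs)"
  shows "linear (\<lambda>y. tensor_ext (G y) t)"
  unfolding ext_rep by (rule lin_param_linear[OF assms])

lemma ext_mlin: assumes "\<And>a' bs'. mlin (\<lambda>a bs. G a bs a' bs')"
  shows "mlin (\<lambda>a bs. tensor_ext (G a bs) t)"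
  using assms unfolding mlin_def
  by (auto intro!: ext_param_linear)

lemma pure_mlin: "mlin pure"
  unfolding mlin_def
proof (intro conjI allI impI)
  fix bs :: "'b list"
  show "linear (\<lambda>a::'a. pure a bs)"
  proof (rule linearI)
    fix a a' :: 'a
    have "tens_rel (sym1 (a + a') bs) (sym1 a bs + sym1 a' bs)"
      using nullsp.addA[of a a' bs] by (simp add: tens_rel_def algebra_simps)
    then show "pure (a + a') bs = pure a bs + pure a' bs"
      by (simp add: pure_def plus_tensor.abs_eq tensor.abs_eq_iff)
  next
    fix r and a :: 'a
    have "tens_rel (sym1 (r *\<^sub>R a) bs) (r *\<^sub>R sym1 a bs)"
      using nullsp.scaleA[of r a bs] by (simp add: tens_rel_def)
    then show "pure (r *\<^sub>R a) bs = r *\<^sub>R pure a bs"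
      by (simp add: pure_def scaleR_tensor.abs_eq tensor.abs_eq_iff)
  qed
next
  fix a :: 'a and bs :: "'b list" and i
  assume i: "i < length bs"
  show "linear (\<lambda>b. pure a (bs[i := b]))"
  proof (rule linearI)
    fix b b' :: 'b
    have "tens_rel (sym1 a (bs[i:=b + b'])) (sym1 a (bs[i:=b]) + sym1 a (bs[i:=b']))"
      using nullsp.addB[OF i, of a b b'] by (simp add: tens_rel_def algebra_simps)
    then show "pure a (bs[i:=b + b']) = pure a (bs[i:=b]) + pure a (bs[i:=b'])"
      by (simp add: pure_def plus_tensor.abs_eq tensor.abs_eq_iff)
  next
    fix r and b :: 'b
    have "tens_rel (sym1 a (bs[i:=r *\<^sub>R b])) (r *\<^sub>R sym1 a (bs[i:=b]))"
      using nullsp.scaleB[OF i, of a r b] by (simp add: tens_rel_def)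
    then show "pure a (bs[i:=r *\<^sub>R b]) = r *\<^sub>R pure a (bs[i:=b])"
      by (simp add: pure_def scaleR_tensor.abs_eq tensor.abs_eq_iff)
  qed
qed


lemma lin_comp: "linear F \<Longrightarrow> linear G \<Longrightarrow> linear (\<lambda>x. G (F x))"
  using linear_compose[of F G] by (simp add: o_def)

lemma pure_lin1: "linear (\<lambda>a. pure a bs)"
  using pure_mlin unfolding mlin_def by blast

lemma pure_slot: "i < length bs \<Longrightarrow> linear (\<lambda>b. pure a (bs[i:=b]))"
  using pure_mlin unfolding mlin_def by blast

lemma map2_upd_right: "length xs = length ys \<Longrightarrow> i < length ys \<Longrightarrow>
   map2 f xs (ys[i:=y]) = (map2 f xs ys)[i := f (xs!i) y]"
proof -
  assume "length xs = length ys" "i < length ys"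
  have "zip xs (ys[i:=y]) = zip (xs[i:=xs!i]) (ys[i:=y])" by simp
  also have "\<dots> = (zip xs ys)[i := (xs!i, y)]" by (rule zip_update)
  finally show ?thesis by (simp add: map_update)
qed

lemma map2_upd_left: "length xs = length ys \<Longrightarrow> i < length xs \<Longrightarrow>
   map2 f (xs[i:=x]) ys = (map2 f xs ys)[i := f x (ys!i)]"
proof -
  assume "length xs = length ys" "i < length xs"
  have "zip (xs[i:=x]) ys = zip (xs[i:=x]) (ys[i:=ys!i])" by simp
  also have "\<dots> = (zip xs ys)[i := (x, ys!i)]" by (rule zip_update)
  finally show ?thesis by (simp add: map_update)
qed

lemma tr_mlin: "mlin (\<lambda>a cs. pure a (cs @ bs))"
  unfolding mlin_def
  by (auto simp: pure_lin1 list_update_append1[symmetric] intro!: pure_slot)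

lemma tr_linear: "linear (\<lambda>t. tensor_right t bs)"
  unfolding tensor_right_def by (rule ext_linear[OF tr_mlin])

lemma tr_pure: "tensor_right (pure a cs) bs = pure a (cs @ bs)"
  unfolding tensor_right_def by (rule ext_pure[OF tr_mlin])

lemma tr_add: "tensor_right (s + t) bs = tensor_right s bs + tensor_right t bs"
  using linear_add[OF tr_linear] .
lemma tr_scale: "tensor_right (r *\<^sub>R t) bs = r *\<^sub>R tensor_right t bs"
  using linear_cmul[OF tr_linear] .
lemma tr_zero: "tensor_right 0 bs = 0"
  using linear_0[OF tr_linear] .

lemma tr_nil: "tensor_right t [] = t"
  using linear_eq_pure[OF tr_linear linear_ident[unfolded id_def], of "[]"]
  by (simp add: tr_pure)

lemma tr_app: "tensor_right (tensor_right t cs) ds = tensor_right t (cs @ ds)"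
  by (rule linear_eq_pure[OF lin_comp[OF tr_linear tr_linear] tr_linear]) (simp add: tr_pure)

lemma tr_slot: assumes "i < length bs" shows "linear (\<lambda>b. tensor_right t (bs[i:=b]))"
  unfolding tensor_right_def ext_rep
proof (rule lin_param_linear)
  fix a cs
  have "\<And>b. cs @ bs[i:=b] = (cs @ bs)[length cs + i := b]"
    by (simp add: list_update_append)
  then show "linear (\<lambda>b. pure a (cs @ bs[i := b]))"
    using pure_slot[of "length cs + i" "cs @ bs" a] assms by simp
qed

lemma tr_single_zero: "tensor_right t [0] = 0"
proof -
  have "linear (\<lambda>b. tensor_right t ([0][0:=b]))" by (rule tr_slot) simp
  from linear_0[OF this] show ?thesis by simp
qed

locale jl2 =
  fixes circ1 br1 :: "'a::real_vector \<Rightarrow> 'a \<Rightarrow> 'a"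
    and circ2 br2 :: "'b::real_vector \<Rightarrow> 'b \<Rightarrow> 'b"
  assumes c1: "bilin circ1" and b1: "bilin br1" and c2: "bilin circ2" and b2: "bilin br2"
begin

lemma c1r: "linear (circ1 x)" and c1l: "linear (\<lambda>y. circ1 y x)"
  and b1r: "linear (br1 x)" and b1l: "linear (\<lambda>y. br1 y x)"
  and c2r: "linear (circ2 u)" and c2l: "linear (\<lambda>v. circ2 v u)"
  and b2r: "linear (br2 u)" and b2l: "linear (\<lambda>v. br2 v u)"
  using c1 b1 c2 b2 by (auto simp: bilin_def)

definition hc :: "'a \<Rightarrow> 'b list \<Rightarrow> 'a \<Rightarrow> 'b list \<Rightarrow> ('a,'b) tensor" where
  "hc a bs a' bs' = (if length bs = length bs' then pure (circ1 a a') (map2 circ2 bs bs') else 0)"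

lemma hc_mlin2: "mlin (\<lambda>a' bs'. hc a bs a' bs')"
  unfolding mlin_def
proof (intro conjI allI impI)
  fix bs'
  show "linear (\<lambda>a'. hc a bs a' bs')"
    by (cases "length bs = length bs'")
       (simp_all add: hc_def linear_zero lin_comp[OF c1r pure_lin1])
next
  fix a' :: 'a and bs' :: "'b list" and i assume i: "i < length bs'"
  show "linear (\<lambda>b. hc a bs a' (bs'[i := b]))"
  proof (cases "length bs = length bs'")
    case True
    then show ?thesis
      using i lin_comp[OF c2r pure_slot[of i "map2 circ2 bs bs'" "circ1 a a'"]]
      by (simp add: hc_def map2_upd_right)
  qed (simp add: hc_def linear_zero)
qed

lemma hc_mlin1: "mlin (\<lambda>a bs. hc a bs a' bs')"
  unfolding mlin_def
proof (intro conjI allI impI)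
  fix bs
  show "linear (\<lambda>a. hc a bs a' bs')"
    by (cases "length bs = length bs'")
       (simp_all add: hc_def linear_zero lin_comp[OF c1l pure_lin1])
next
  fix a :: 'a and bs :: "'b list" and i assume i: "i < length bs"
  show "linear (\<lambda>b. hc a (bs[i := b]) a' bs')"
  proof (cases "length bs = length bs'")
    case True
    then show ?thesis
      using i lin_comp[OF c2l pure_slot[of i "map2 circ2 bs bs'" "circ1 a a'"]]
      by (simp add: hc_def map2_upd_left)
  qed (simp add: hc_def linear_zero)
qed

abbreviation tc where "tc \<equiv> tcirc circ1 circ2"

lemma tc_def': "tc s t = tensor_ext (\<lambda>a bs. tensor_ext (hc a bs) t) s"
  by (simp add: tcirc_def tensor_ext2_def hc_def[abs_def])

lemma tc_lin1: "linear (\<lambda>s. tc s t)"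
  unfolding tc_def' by (rule ext_linear[OF ext_mlin[OF hc_mlin1]])

lemma tc_lin2: "linear (\<lambda>t. tc s t)"
  unfolding tc_def' ext_rep[of _ s]
  by (rule lin_param_linear) (rule ext_linear[OF hc_mlin2])

lemma tc_pure: "tc (pure a bs) (pure a' bs') = hc a bs a' bs'"
  unfolding tc_def' by (simp add: ext_pure[OF hc_mlin1] ext_pure[OF hc_mlin2])

lemma pure_upd_lin: "k < length L \<Longrightarrow> linear F \<Longrightarrow> linear (\<lambda>b. pure a (L[k := F b]))"
  by (rule lin_comp[OF _ pure_slot])

lemma pure_last_lin: "linear F \<Longrightarrow> linear (\<lambda>b. pure a (xs @ [F b]))"
  using pure_upd_lin[of "length xs" "xs @ [0]" F a] by simp

lemma tr_single_lin: "linear F \<Longrightarrow> linear (\<lambda>b. tensor_right T [F b])"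
  using lin_comp[OF _ tr_slot[of 0 "[0]" T], of F] by simp

abbreviation pb where "pb \<equiv> pbr_rev circ1 br1 circ2 br2"

lemma pb_len: "length rs \<noteq> length rs' \<Longrightarrow> pb a rs a' rs' = 0"
  by (cases rs; cases rs') auto

lemma pb_lin_a: "linear (\<lambda>a. pb a rs a' rs')"
proof (induction rs arbitrary: rs')
  case Nil
  then show ?case
    by (cases rs') (simp_all add: linear_zero lin_comp[OF b1l pure_lin1])
next
  case (Cons b rs)
  show ?case
  proof (cases rs')
    case (Cons b' rs'')
    then show ?thesis
      using linear_compose_add[OF lin_comp[OF Cons.IH tr_linear] lin_comp[OF c1r pure_lin1]]
      by (cases "length rs = length rs''") (simp_all add: linear_zero)
  qed (simp add: linear_zero)
qed

lemma pb_lin_a': "linear (\<lambda>a'. pb a rs a' rs')"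
proof (induction rs arbitrary: rs')
  case Nil
  then show ?case
    by (cases rs') (simp_all add: linear_zero lin_comp[OF b1r pure_lin1])
next
  case (Cons b rs)
  show ?case
  proof (cases rs')
    case (Cons b' rs'')
    then show ?thesis
      using linear_compose_add[OF lin_comp[OF Cons.IH tr_linear] lin_comp[OF c1l pure_lin1]]
      by (cases "length rs = length rs''") (simp_all add: linear_zero)
  qed (simp add: linear_zero)
qed

lemma rev_map2_upd: assumes "j < length L"
  shows "rev L @ [c] = (rev L @ [c])" and
   "(rev (L[j:=y]) @ [c]) = (rev L @ [c])[length L - j - 1 := y]"
  using assms by (simp_all add: rev_update list_update_append1)

lemma pb_slot1: "i < length rs \<Longrightarrow> linear (\<lambda>b. pb a (rs[i:=b]) a' rs')"
proof (induction rs arbitrary: i rs')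
  case Nil then show ?case by simp
next
  case (Cons c rs)
  show ?case
  proof (cases rs')
    case Nil
    then show ?thesis by (cases i) (simp_all add: linear_zero)
  next
    case (Cons c' rs'')
    show ?thesis
    proof (cases "length rs = length rs''")
      case False
      then show ?thesis using Cons by (cases i) (simp_all add: linear_zero)
    next
      case len: True
      show ?thesis
      proof (cases i)
        case 0
        have "linear (\<lambda>b. tensor_right (pb a rs a' rs'') [circ2 b c']
              + pure (circ1 a' a) (rev (map2 circ2 rs'' rs) @ [br2 b c']))"
          by (rule linear_compose_add[OF tr_single_lin[OF c2l] pure_last_lin[OF b2l]])
        then show ?thesis using 0 Cons len by simp
      next
        case (Suc j)
        with Cons.prems have j: "j < length rs" by simp
        let ?L = "map2 circ2 rs'' rs"
        have jL: "j < length ?L" using j len by simp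
        have eq: "\<And>b. rev (map2 circ2 rs'' (rs[j:=b])) @ [br2 c c']
            = (rev ?L @ [br2 c c'])[length ?L - j - 1 := circ2 (rs''!j) b]"
          using j len jL by (simp add: map2_upd_right rev_update list_update_append1)
        have "linear (\<lambda>b. tensor_right (pb a (rs[j:=b]) a' rs'') [circ2 c c']
              + pure (circ1 a' a) ((rev ?L @ [br2 c c'])[length ?L - j - 1 := circ2 (rs''!j) b]))"
          by (rule linear_compose_add[OF lin_comp[OF Cons.IH[OF j] tr_linear] pure_upd_lin[OF _ c2r]])
             (use jL in simp)
        then show ?thesis using Suc Cons len eq by simp
      qed
    qed
  qed
qed

lemma pb_slot2: "i < length rs' \<Longrightarrow> linear (\<lambda>b. pb a rs a' (rs'[i:=b]))"
proof (induction rs' arbitrary: i rs)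
  case Nil then show ?case by simp
next
  case (Cons c' rs'')
  show ?case
  proof (cases rs)
    case Nil
    then show ?thesis by (cases i) (simp_all add: linear_zero)
  next
    case (Cons c rs0)
    show ?thesis
    proof (cases "length rs0 = length rs''")
      case False
      then show ?thesis using Cons by (cases i) (simp_all add: linear_zero)
    next
      case len: True
      show ?thesis
      proof (cases i)
        case 0
        have "linear (\<lambda>b. tensor_right (pb a rs0 a' rs'') [circ2 c b]
              + pure (circ1 a' a) (rev (map2 circ2 rs'' rs0) @ [br2 c b]))"
          by (rule linear_compose_add[OF tr_single_lin[OF c2r] pure_last_lin[OF b2r]])
        then show ?thesis using 0 Cons len by simp
      next
        case (Suc j)
        with Cons.prems have j: "j < length rs''" by simp
        let ?L = "map2 circ2 rs'' rs0"
        have jL: "j < length ?L" using j len by simp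
        have eq: "\<And>b. rev (map2 circ2 (rs''[j:=b]) rs0) @ [br2 c c']
            = (rev ?L @ [br2 c c'])[length ?L - j - 1 := circ2 b (rs0!j)]"
          using j len jL by (simp add: map2_upd_left rev_update list_update_append1)
        have "linear (\<lambda>b. tensor_right (pb a rs0 a' (rs''[j:=b])) [circ2 c c']
              + pure (circ1 a' a) ((rev ?L @ [br2 c c'])[length ?L - j - 1 := circ2 b (rs0!j)]))"
          by (rule linear_compose_add[OF lin_comp[OF Cons.IH[OF j] tr_linear] pure_upd_lin[OF _ c2l]])
             (use jL in simp)
        then show ?thesis using Suc Cons len eq by simp
      qed
    qed
  qed
qed

definition hb :: "'a \<Rightarrow> 'b list \<Rightarrow> 'a \<Rightarrow> 'b list \<Rightarrow> ('a,'b) tensor" where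
  "hb a bs a' bs' = pb a (rev bs) a' (rev bs')"

lemma hb_mlin1: "mlin (\<lambda>a bs. hb a bs a' bs')"
  unfolding mlin_def hb_def
proof (intro conjI allI impI)
  fix a :: 'a and bs :: "'b list" and i assume i: "i < length bs"
  show "linear (\<lambda>b. pb a (rev (bs[i := b])) a' (rev bs'))"
    using pb_slot1[of "length bs - i - 1" "rev bs" a a' "rev bs'"] i by (simp add: rev_update)
qed (rule pb_lin_a)

lemma hb_mlin2: "mlin (\<lambda>a' bs'. hb a bs a' bs')"
  unfolding mlin_def hb_def
proof (intro conjI allI impI)
  fix a' :: 'a and bs' :: "'b list" and i assume i: "i < length bs'"
  show "linear (\<lambda>b. pb a (rev bs) a' (rev (bs'[i := b])))"
    using pb_slot2[of "length bs' - i - 1" "rev bs'" a "rev bs" a'] i by (simp add: rev_update)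
qed (rule pb_lin_a')

abbreviation tb where "tb \<equiv> tbr circ1 br1 circ2 br2"

lemma tb_def': "tb s t = tensor_ext (\<lambda>a bs. tensor_ext (hb a bs) t) s"
  by (simp add: tbr_def tensor_ext2_def hb_def[abs_def])

lemma tb_lin1: "linear (\<lambda>s. tb s t)"
  unfolding tb_def' by (rule ext_linear[OF ext_mlin[OF hb_mlin1]])

lemma tb_lin2: "linear (\<lambda>t. tb s t)"
  unfolding tb_def' ext_rep[of _ s]
  by (rule lin_param_linear) (rule ext_linear[OF hb_mlin2])

lemma tb_pure0: "tb (pure a bs) (pure a' bs') = hb a bs a' bs'"
  unfolding tb_def' by (simp add: ext_pure[OF hb_mlin1] ext_pure[OF hb_mlin2])

lemma tb_pure: "tb (pure a bs) (pure a' bs') = pb a (rev bs) a' (rev bs')"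
  using tb_pure0 by (simp add: hb_def)

lemma bilin_eq_pure:
  assumes F1: "\<And>t. linear (\<lambda>s. F s t)" and F2: "\<And>s. linear (\<lambda>t. F s t)"
    and G1: "\<And>t. linear (\<lambda>s. G s t)" and G2: "\<And>s. linear (\<lambda>t. G s t)"
    and eq: "\<And>a bs a' bs'. F (pure a bs) (pure a' bs') = G (pure a bs) (pure a' bs')"
  shows "F s t = G s t"
proof -
  have "\<And>a bs. F (pure a bs) t = G (pure a bs) t"
    by (rule linear_eq_pure[OF F2 G2]) (rule eq)
  then show ?thesis by (rule linear_eq_pure[OF F1 G1])
qed

lemma rev_map2_rev: "length xs = length ys \<Longrightarrow> rev (map2 f (rev xs) (rev ys)) = map2 f xs ys"
  by (simp add: zip_rev rev_map)

lemma L1: "tb (tensor_right X [b]) (tensor_right X' [b'])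
   = tensor_right (tb X X') [circ2 b b'] + tensor_right (tc X' X) [br2 b b']"
proof (rule bilin_eq_pure[where F = "\<lambda>X X'. tb (tensor_right X [b]) (tensor_right X' [b'])"
      and G = "\<lambda>X X'. tensor_right (tb X X') [circ2 b b'] + tensor_right (tc X' X) [br2 b b']"])
  show "\<And>t. linear (\<lambda>s. tb (tensor_right s [b]) (tensor_right t [b']))"
    by (rule lin_comp[OF tr_linear tb_lin1])
  show "\<And>s. linear (\<lambda>t. tb (tensor_right s [b]) (tensor_right t [b']))"
    by (rule lin_comp[OF tr_linear tb_lin2])
  show "\<And>t. linear (\<lambda>s. tensor_right (tb s t) [circ2 b b'] + tensor_right (tc t s) [br2 b b'])"
    by (rule linear_compose_add[OF lin_comp[OF tb_lin1 tr_linear] lin_comp[OF tc_lin2 tr_linear]])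
  show "\<And>s. linear (\<lambda>t. tensor_right (tb s t) [circ2 b b'] + tensor_right (tc t s) [br2 b b'])"
    by (rule linear_compose_add[OF lin_comp[OF tb_lin2 tr_linear] lin_comp[OF tc_lin1 tr_linear]])
  fix a cs a' cs'
  show "tb (tensor_right (pure a cs) [b]) (tensor_right (pure a' cs') [b'])
     = tensor_right (tb (pure a cs) (pure a' cs')) [circ2 b b'] + tensor_right (tc (pure a' cs') (pure a cs)) [br2 b b']"
  proof (cases "length cs = length cs'")
    case True
    then show ?thesis
      by (simp add: tr_pure tb_pure tc_pure hc_def rev_map2_rev)
  next
    case False
    then show ?thesis
      by (simp add: tr_pure tb_pure tc_pure hc_def pb_len tr_zero)
  qed
qed

lemma TC: "length ys = length zs \<Longrightarrow>
   tc (tensor_right X ys) (tensor_right Y zs) = tensor_right (tc X Y) (map2 circ2 ys zs)"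
proof (rule bilin_eq_pure[where F = "\<lambda>X Y. tc (tensor_right X ys) (tensor_right Y zs)"
      and G = "\<lambda>X Y. tensor_right (tc X Y) (map2 circ2 ys zs)"])
  show "\<And>t. linear (\<lambda>s. tc (tensor_right s ys) (tensor_right t zs))"
    by (rule lin_comp[OF tr_linear tc_lin1])
  show "\<And>s. linear (\<lambda>t. tc (tensor_right s ys) (tensor_right t zs))"
    by (rule lin_comp[OF tr_linear tc_lin2])
  show "\<And>t. linear (\<lambda>s. tensor_right (tc s t) (map2 circ2 ys zs))"
    by (rule lin_comp[OF tc_lin1 tr_linear])
  show "\<And>s. linear (\<lambda>t. tensor_right (tc s t) (map2 circ2 ys zs))"
    by (rule lin_comp[OF tc_lin2 tr_linear])
  fix a cs a' cs'
  assume len: "length ys = length zs"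
  show "tc (tensor_right (pure a cs) ys) (tensor_right (pure a' cs') zs)
     = tensor_right (tc (pure a cs) (pure a' cs')) (map2 circ2 ys zs)"
  proof (cases "length cs = length cs'")
    case True
    then show ?thesis using len
      by (simp add: tr_pure tc_pure hc_def zip_append)
  next
    case False
    then show ?thesis using len
      by (simp add: tr_pure tc_pure hc_def tr_zero)
  qed
qed

lemma rep_snoc: "replicate (Suc n) x = replicate n x @ [x]"
  by (simp add: replicate_append_same)

lemma R1: assumes u1: "\<And>y. circ2 y e2 = y" and u3: "\<And>y. br2 y e2 = 0"
  shows "tb (tensor_right U ys) (tensor_right V (replicate (length ys) e2)) = tensor_right (tb U V) ys"
proof (induction ys rule: rev_induct)
  case Nil then show ?case by (simp add: tr_nil)
next
  case (snoc y ys)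
  have "tb (tensor_right U (ys @ [y])) (tensor_right V (replicate (length (ys @ [y])) e2))
      = tb (tensor_right (tensor_right U ys) [y]) (tensor_right (tensor_right V (replicate (length ys) e2)) [e2])"
    by (simp only: tr_app length_append_singleton rep_snoc)
  also have "\<dots> = tensor_right (tensor_right (tb U V) ys) [y]"
    by (simp add: L1 u1 u3 snoc tr_single_zero)
  finally show ?case by (simp add: tr_app)
qed

lemma R2: assumes u2: "\<And>y. circ2 e2 y = y" and u4: "\<And>y. br2 e2 y = 0"
  shows "tb (tensor_right V (replicate (length ys) e2)) (tensor_right U ys) = tensor_right (tb V U) ys"
proof (induction ys rule: rev_induct)
  case Nil then show ?case by (simp add: tr_nil)
next
  case (snoc y ys)
  have "tb (tensor_right V (replicate (length (ys @ [y])) e2)) (tensor_right U (ys @ [y]))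
      = tb (tensor_right (tensor_right V (replicate (length ys) e2)) [e2]) (tensor_right (tensor_right U ys) [y])"
    by (simp only: tr_app length_append_singleton rep_snoc)
  also have "\<dots> = tensor_right (tensor_right (tb V U) ys) [y]"
    by (simp add: L1 u2 u4 snoc tr_single_zero)
  finally show ?case by (simp add: tr_app)
qed

end

lemma tgrade_subspace: "subspace (tgrade k)"
proof (rule subspaceI)
  show "0 \<in> tgrade k" unfolding tgrade_def by (auto simp: zero_tensor.abs_eq intro!: exI[of _ 0])
next
  fix x y :: "('a,'b) tensor" assume "x \<in> tgrade k" "y \<in> tgrade k"
  then obtain f g where f: "x = abs_tensor f" "\<forall>z\<in>ks f. length (snd z) = k"
    and g: "y = abs_tensor g" "\<forall>z\<in>ks g. length (snd z) = k" unfolding tgrade_def by blast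
  have "x + y = abs_tensor (f + g)" using f g by (simp add: plus_tensor.abs_eq)
  moreover have "\<forall>z\<in>ks (f+g). length (snd z) = k" using f g keys_add[of f g] by blast
  ultimately show "x + y \<in> tgrade k" unfolding tgrade_def by blast
next
  fix c and x :: "('a,'b) tensor" assume "x \<in> tgrade k"
  then obtain f where f: "x = abs_tensor f" "\<forall>z\<in>ks f. length (snd z) = k"
    unfolding tgrade_def by blast
  have "c *\<^sub>R x = abs_tensor (c *\<^sub>R f)" using f by (simp add: scaleR_tensor.abs_eq)
  moreover have "ks (c *\<^sub>R f) \<subseteq> ks f" by (auto simp: in_keys_iff scaleR_poly_mapping.rep_eq)
  ultimately show "c *\<^sub>R x \<in> tgrade k" using f unfolding tgrade_def by blast
qed

lemma pure_grade: "pure a bs \<in> tgrade (length bs)"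
  unfolding tgrade_def pure_def sym1_def by auto

lemma grade_ext: assumes "T \<in> tgrade k" "mlin g" "subspace S"
  "\<And>a bs. length bs = k \<Longrightarrow> g a bs \<in> S"
  shows "tensor_ext g T \<in> S"
proof -
  obtain f where f: "T = abs_tensor f" "\<forall>z\<in>ks f. length (snd z) = k"
    using assms(1) unfolding tgrade_def by blast
  have "tensor_ext g T = lin g f" using f ext_abs[OF assms(2)] by simp
  also have "\<dots> \<in> S" unfolding lin_def
    by (rule subspace_sum[OF assms(3)]) (use f assms(4) in \<open>auto intro!: subspace_scale[OF assms(3)]\<close>)
  finally show ?thesis .
qed

lemma grade_zero_ext: assumes "T \<in> tgrade k" "mlin g"
  "\<And>a bs. length bs = k \<Longrightarrow> g a bs = 0"
  shows "tensor_ext g T = 0"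
proof -
  obtain f where f: "T = abs_tensor f" "\<forall>z\<in>ks f. length (snd z) = k"
    using assms(1) unfolding tgrade_def by blast
  have "tensor_ext g T = lin g f" using f ext_abs[OF assms(2)] by simp
  also have "\<dots> = 0" unfolding lin_def
    by (rule sum.neutral) (use f assms(3) in auto)
  finally show ?thesis .
qed

lemma tr_grade: "T \<in> tgrade k \<Longrightarrow> tensor_right T bs \<in> tgrade (k + length bs)"
  unfolding tensor_right_def
  by (rule grade_ext[OF _ tr_mlin tgrade_subspace]) (auto, metis length_append pure_grade)

lemma linear_mlin_comp: "linear Q \<Longrightarrow> mlin (\<lambda>a bs. Q (pure a bs))"
  unfolding mlin_def by (auto intro: lin_comp[OF pure_lin1] lin_comp[OF pure_slot])

lemma pid_mlin: "linear F \<Longrightarrow> mlin (\<lambda>a bs. tensor_right (F a) bs)"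
  unfolding mlin_def by (auto intro: lin_comp[OF _ tr_linear] tr_slot)

lemma pid_linear: "linear F \<Longrightarrow> linear (phi_id F)"
  unfolding phi_id_def by (rule ext_linear[OF pid_mlin])

lemma pid_pure: "linear F \<Longrightarrow> phi_id F (pure a bs) = tensor_right (F a) bs"
  unfolding phi_id_def by (rule ext_pure[OF pid_mlin])

lemma PT: "linear F \<Longrightarrow> phi_id F (tensor_right X ys) = tensor_right (phi_id F X) ys"
  by (rule linear_eq_pure[OF lin_comp[OF tr_linear pid_linear] lin_comp[OF pid_linear tr_linear]])
     (simp_all add: tr_pure pid_pure tr_app)

lemma COMP: "linear F \<Longrightarrow> linear G \<Longrightarrow> phi_id (phi_id G \<circ> F) t = phi_id G (phi_id F t)"
proof -
  assume F: "linear F" and G: "linear G"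
  have GF: "linear (phi_id G \<circ> F)" by (rule linear_compose[OF F pid_linear[OF G]])
  show ?thesis
    by (rule linear_eq_pure[OF pid_linear[OF GF] lin_comp[OF pid_linear[OF F] pid_linear[OF G]]])
       (simp add: pid_pure[OF GF] pid_pure[OF F] PT[OF G])
qed

lemma pid_grade: "linear F \<Longrightarrow> (\<And>a. F a \<in> tgrade 1) \<Longrightarrow> T \<in> tgrade k \<Longrightarrow> phi_id F T \<in> tgrade (Suc k)"
  unfolding phi_id_def
  by (rule grade_ext[OF _ pid_mlin tgrade_subspace]) (auto, metis One_nat_def plus_1_eq_Suc tr_grade)

lemma phi_aux_linear: "linear \<phi> \<Longrightarrow> linear (phi_aux \<phi> k)"
  by (induction k) (auto intro: linear_compose pid_linear)

lemma phi_aux_grade: "linear \<phi> \<Longrightarrow> (\<And>a. \<phi> a \<in> tgrade 1) \<Longrightarrow> phi_aux \<phi> k a \<in> tgrade (Suc k)"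
  by (induction k) (auto intro: pid_grade)

lemma DEC: "linear \<phi> \<Longrightarrow> phi_aux \<phi> (j + k + 1) = phi_id (phi_aux \<phi> j) \<circ> phi_aux \<phi> k"
proof (induction j)
  case 0 then show ?case by simp
next
  case (Suc j)
  have "phi_aux \<phi> (Suc j + k + 1) = phi_id \<phi> \<circ> phi_aux \<phi> (j + k + 1)" by simp
  also have "\<dots> = phi_id \<phi> \<circ> (phi_id (phi_aux \<phi> j) \<circ> phi_aux \<phi> k)"
    by (simp only: Suc.IH[OF Suc.prems])
  also have "\<dots> = phi_id (phi_aux \<phi> (Suc j)) \<circ> phi_aux \<phi> k"
    using COMP[OF phi_aux_linear[OF Suc.prems, of j] Suc.prems] by (auto simp: fun_eq_iff)
  finally show ?case .
qed

context jl2 begin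

lemma tb_grade0: assumes "S \<in> tgrade k" "T \<in> tgrade l" "k \<noteq> l" shows "tb S T = 0"
  unfolding tb_def'
proof (rule grade_zero_ext[OF assms(1) ext_mlin[OF hb_mlin1]])
  fix a and bs :: "'b list" assume "length bs = k"
  show "tensor_ext (hb a bs) T = 0"
    by (rule grade_zero_ext[OF assms(2) hb_mlin2]) (use assms \<open>length bs = k\<close> in \<open>simp add: hb_def pb_len\<close>)
qed

end

locale jl3 = jl2 circ1 br1 circ2 br2
  for circ1 br1 :: "'a::real_vector \<Rightarrow> 'a \<Rightarrow> 'a" and circ2 br2 :: "'b::real_vector \<Rightarrow> 'b \<Rightarrow> 'b" +
  fixes \<phi> :: "'a \<Rightarrow> ('a,'b) tensor" and e2 :: 'b and C :: 'a
  assumes phi_lin: "linear \<phi>" and phi_rng: "\<And>a. \<phi> a \<in> tgrade 1"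
    and phi_br: "\<And>a b. tb (\<phi> a) (\<phi> b) = \<phi> (br1 a b)"
    and phi_circ: "\<And>a b. \<phi> (circ1 a b) = tc (\<phi> a) (\<phi> b)"
    and u1: "\<And>y. circ2 y e2 = y" and u2: "\<And>y. circ2 e2 y = y"
    and u3: "\<And>y. br2 y e2 = 0" and u4: "\<And>y. br2 e2 y = 0"
    and cas1: "\<And>a. br1 a C = 0" and cas2: "\<And>a. br1 C a = 0"
begin

lemma H_pure: "tb (tensor_right (\<phi> a) bs) (tensor_right (\<phi> a') bs') = phi_id \<phi> (pb a (rev bs) a' (rev bs'))"
proof (cases "length bs = length bs'")
  case False
  have g1: "tensor_right (\<phi> a) bs \<in> tgrade (1 + length bs)" by (rule tr_grade[OF phi_rng])
  have g2: "tensor_right (\<phi> a') bs' \<in> tgrade (1 + length bs')" by (rule tr_grade[OF phi_rng])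
  have "tb (tensor_right (\<phi> a) bs) (tensor_right (\<phi> a') bs') = 0"
    by (rule tb_grade0[OF g1 g2]) (use False in simp)
  moreover have "pb a (rev bs) a' (rev bs') = 0" using False by (simp add: pb_len)
  ultimately show ?thesis by (simp add: linear_0[OF pid_linear[OF phi_lin]])
next
  case True
  have "\<forall>bs'. length bs' = length bs \<longrightarrow>
     tb (tensor_right (\<phi> a) bs) (tensor_right (\<phi> a') bs') = phi_id \<phi> (pb a (rev bs) a' (rev bs'))"
  proof (induction bs rule: rev_induct)
    case Nil
    show ?case by (simp add: tr_nil pid_pure[OF phi_lin] phi_br)
  next
    case (snoc b cs)
    show ?case
    proof (intro allI impI)
      fix bs' :: "'b list" assume len: "length bs' = length (cs @ [b])"
      then obtain cs' b' where bs': "bs' = cs' @ [b']" by (cases bs' rule: rev_cases) auto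
      with len have lc: "length cs' = length cs" by simp
      have "tb (tensor_right (\<phi> a) (cs @ [b])) (tensor_right (\<phi> a') bs')
        = tb (tensor_right (tensor_right (\<phi> a) cs) [b]) (tensor_right (tensor_right (\<phi> a') cs') [b'])"
        by (simp add: bs' tr_app)
      also have "\<dots> = tensor_right (phi_id \<phi> (pb a (rev cs) a' (rev cs'))) [circ2 b b']
          + tensor_right (tensor_right (\<phi> (circ1 a' a)) (map2 circ2 cs' cs)) [br2 b b']"
        using snoc.IH lc by (simp add: L1 TC phi_circ)
      also have "\<dots> = phi_id \<phi> (pb a (rev (cs @ [b])) a' (rev bs'))"
        using lc by (simp add: bs' linear_add[OF pid_linear[OF phi_lin]] PT[OF phi_lin]
            pid_pure[OF phi_lin] rev_map2_rev tr_app)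
      finally show "tb (tensor_right (\<phi> a) (cs @ [b])) (tensor_right (\<phi> a') bs')
          = phi_id \<phi> (pb a (rev (cs @ [b])) a' (rev bs'))" .
    qed
  qed
  then show ?thesis using True by simp
qed

lemma H: "tb (phi_id \<phi> S) (phi_id \<phi> T) = phi_id \<phi> (tb S T)"
proof (rule bilin_eq_pure[where F = "\<lambda>S T. tb (phi_id \<phi> S) (phi_id \<phi> T)" and G = "\<lambda>S T. phi_id \<phi> (tb S T)"])
  show "\<And>t. linear (\<lambda>s. tb (phi_id \<phi> s) (phi_id \<phi> t))"
    by (rule lin_comp[OF pid_linear[OF phi_lin] tb_lin1])
  show "\<And>s. linear (\<lambda>t. tb (phi_id \<phi> s) (phi_id \<phi> t))"
    by (rule lin_comp[OF pid_linear[OF phi_lin] tb_lin2])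
  show "\<And>t. linear (\<lambda>s. phi_id \<phi> (tb s t))"
    by (rule lin_comp[OF tb_lin1 pid_linear[OF phi_lin]])
  show "\<And>s. linear (\<lambda>t. phi_id \<phi> (tb s t))"
    by (rule lin_comp[OF tb_lin2 pid_linear[OF phi_lin]])
  fix a bs a' bs'
  show "tb (phi_id \<phi> (pure a bs)) (phi_id \<phi> (pure a' bs')) = phi_id \<phi> (tb (pure a bs) (pure a' bs'))"
    by (simp add: pid_pure[OF phi_lin] tb_pure H_pure)
qed

lemma aux_br: "tb (phi_aux \<phi> k a) (phi_aux \<phi> k b) = phi_aux \<phi> k (br1 a b)"
  by (induction k arbitrary: a b) (simp_all add: phi_br H)

lemma core1: "tb (phi_aux \<phi> (j + m) a) (tensor_right (phi_aux \<phi> j C) (replicate m e2)) = 0"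
proof (cases m)
  case 0
  then show ?thesis
    by (simp add: tr_nil aux_br cas1 linear_0[OF phi_aux_linear[OF phi_lin]])
next
  case (Suc k)
  let ?F = "phi_aux \<phi> j"
  let ?Y = "tensor_right (?F C) (replicate m e2)"
  let ?Q = "\<lambda>T. tb (phi_id ?F T) ?Y"
  have F: "linear ?F" by (rule phi_aux_linear[OF phi_lin])
  have Q: "linear ?Q" by (rule lin_comp[OF pid_linear[OF F] tb_lin1])
  have "phi_aux \<phi> (j + m) a = phi_id ?F (phi_aux \<phi> k a)"
    using DEC[OF phi_lin, of j k] Suc by simp
  then have "tb (phi_aux \<phi> (j + m) a) ?Y = ?Q (phi_aux \<phi> k a)" by simp
  also have "\<dots> = tensor_ext (\<lambda>x ys. ?Q (pure x ys)) (phi_aux \<phi> k a)"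
    by (rule linear_via_pure[OF Q])
  also have "\<dots> = 0"
  proof (rule grade_zero_ext[OF phi_aux_grade[OF phi_lin phi_rng] linear_mlin_comp[OF Q]])
    fix x and ys :: "'b list" assume l: "length ys = Suc k"
    have "?Q (pure x ys) = tb (tensor_right (?F x) ys) (tensor_right (?F C) (replicate (length ys) e2))"
      using l Suc by (simp add: pid_pure[OF F])
    also have "\<dots> = tensor_right (tb (?F x) (?F C)) ys" by (rule R1[OF u1 u3])
    also have "\<dots> = 0" by (simp add: aux_br cas1 linear_0[OF F] tr_zero)
    finally show "?Q (pure x ys) = 0" .
  qed
  finally show ?thesis .
qed

lemma core2: "tb (tensor_right (phi_aux \<phi> j C) (replicate m e2)) (phi_aux \<phi> (j + m) a) = 0"
proof (cases m)
  case 0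
  then show ?thesis
    by (simp add: tr_nil aux_br cas2 linear_0[OF phi_aux_linear[OF phi_lin]])
next
  case (Suc k)
  let ?F = "phi_aux \<phi> j"
  let ?Y = "tensor_right (?F C) (replicate m e2)"
  let ?Q = "\<lambda>T. tb ?Y (phi_id ?F T)"
  have F: "linear ?F" by (rule phi_aux_linear[OF phi_lin])
  have Q: "linear ?Q" by (rule lin_comp[OF pid_linear[OF F] tb_lin2])
  have "phi_aux \<phi> (j + m) a = phi_id ?F (phi_aux \<phi> k a)"
    using DEC[OF phi_lin, of j k] Suc by simp
  then have "tb ?Y (phi_aux \<phi> (j + m) a) = ?Q (phi_aux \<phi> k a)" by simp
  also have "\<dots> = tensor_ext (\<lambda>x ys. ?Q (pure x ys)) (phi_aux \<phi> k a)"
    by (rule linear_via_pure[OF Q])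
  also have "\<dots> = 0"
  proof (rule grade_zero_ext[OF phi_aux_grade[OF phi_lin phi_rng] linear_mlin_comp[OF Q]])
    fix x and ys :: "'b list" assume l: "length ys = Suc k"
    have "?Q (pure x ys) = tb (tensor_right (?F C) (replicate (length ys) e2)) (tensor_right (?F x) ys)"
      using l Suc by (simp add: pid_pure[OF F])
    also have "\<dots> = tensor_right (tb (?F C) (?F x)) ys" by (rule R2[OF u2 u4])
    also have "\<dots> = 0" by (simp add: aux_br cas2 linear_0[OF F] tr_zero)
    finally show "?Q (pure x ys) = 0" .
  qed
  finally show ?thesis .
qed

lemma main:
  shows "(\<forall>i j. 2 \<le> i \<and> i \<le> N \<and> 2 \<le> j \<and> j \<le> N \<longrightarrow>
            tb (Cas \<phi> e2 C N i) (Cas \<phi> e2 C N j) = 0)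
       \<and> (\<forall>a i. 2 \<le> i \<and> i \<le> N \<longrightarrow>
            tb (phi_sup \<phi> N a) (Cas \<phi> e2 C N i) = 0)"
proof (intro conjI allI impI)
  fix a i assume h: "2 \<le> i \<and> i \<le> N"
  then have "N - 2 = (i - 2) + (N - i)" by simp
  then show "tb (phi_sup \<phi> N a) (Cas \<phi> e2 C N i) = 0"
    using core1[of "i - 2" "N - i" a] by (simp add: phi_sup_def Cas_def)
next
  fix i j assume h: "2 \<le> i \<and> i \<le> N \<and> 2 \<le> j \<and> j \<le> N"
  show "tb (Cas \<phi> e2 C N i) (Cas \<phi> e2 C N j) = 0"
  proof (cases "i \<le> j")
    case True
    let ?ys = "replicate (N - j) e2"
    let ?V = "tensor_right (phi_aux \<phi> (i - 2) C) (replicate (j - i) e2)"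
    have ci: "Cas \<phi> e2 C N i = tensor_right ?V (replicate (length ?ys) e2)"
    proof -
      have "N - i = (j - i) + (N - j)" using h True by simp
      then show ?thesis by (simp add: Cas_def phi_sup_def tr_app replicate_add[symmetric])
    qed
    have cj: "Cas \<phi> e2 C N j = tensor_right (phi_aux \<phi> (j - 2) C) ?ys"
      by (simp add: Cas_def phi_sup_def)
    have jj: "j - 2 = (i - 2) + (j - i)" using h True by simp
    show ?thesis
      unfolding ci cj R2[OF u2 u4] using core2[of "i - 2" "j - i" C] jj by (simp add: tr_zero)
  next
    case False
    let ?ys = "replicate (N - i) e2"
    let ?V = "tensor_right (phi_aux \<phi> (j - 2) C) (replicate (i - j) e2)"
    have cj: "Cas \<phi> e2 C N j = tensor_right ?V (replicate (length ?ys) e2)"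
    proof -
      have "N - j = (i - j) + (N - i)" using h False by simp
      then show ?thesis by (simp add: Cas_def phi_sup_def tr_app replicate_add[symmetric])
    qed
    have ci: "Cas \<phi> e2 C N i = tensor_right (phi_aux \<phi> (i - 2) C) ?ys"
      by (simp add: Cas_def phi_sup_def)
    have ii: "i - 2 = (j - 2) + (i - j)" using h False by simp
    show ?thesis
      unfolding ci cj R1[OF u1 u3] using core1[of "j - 2" "i - j" C] ii by (simp add: tr_zero)
  qed
qed

end

lemma gJL_parts:
  assumes "gen_JL c b e"
  shows "bilin c" "bilin b" "\<And>a. c e a = a" "\<And>a. c a e = a" "\<And>x y. b x y = - b y x"
    "\<And>x y z. b x (c y z) = c y (b x z) + c (b x y) z"
proof -
  have h: "bilin c \<and> bilin b \<and> (\<forall>a. c e a = a \<and> c a e = a) \<and>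
     (\<forall>a b' d. c (c a b') d = c a (c b' d)) \<and> (\<forall>a b'. b a b' = - b b' a) \<and>
     (\<forall>a b' d. b a (b b' d) + b d (b a b') + b b' (b d a) = 0) \<and>
     (\<forall>a b' d. b a (c b' d) = c b' (b a d) + c (b a b') d)"
    using assms unfolding gen_JL_def .
  show "bilin c" using h by (rule conjunct1)
  show "bilin b" using h by (elim conjE)
  show "\<And>a. c e a = a" using h by (elim conjE) (erule allE, erule conjE)
  show "\<And>a. c a e = a" using h by (elim conjE) (erule allE, erule conjE)
  show "\<And>x y. b x y = - b y x" using h by (elim conjE) (erule allE, erule allE)
  show "\<And>x y z. b x (c y z) = c y (b x z) + c (b x y) z" using h by (elim conjE) (erule allE, erule allE, erule allE)
qed

theorem theorem1:
  fixes circ1 br1 :: "'a::real_vector \<Rightarrow> 'a \<Rightarrow> 'a" and e1 :: 'a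
    and circ2 br2 :: "'b::real_vector \<Rightarrow> 'b \<Rightarrow> 'b" and e2 :: 'b
    and C :: 'a and \<phi> :: "'a \<Rightarrow> ('a, 'b) tensor" and N :: nat
  assumes alg: "(CJL circ1 br1 e1 \<and> CJL circ2 br2 e2) \<or> (QJL circ1 br1 e1 \<and> QJL circ2 br2 e2)"
    and casimir: "\<forall>a. br1 C a = 0"
    and lin: "linear \<phi>"
    and range: "\<forall>a. \<phi> a \<in> tgrade 1"
    and hom_br: "\<forall>a b. tbr circ1 br1 circ2 br2 (\<phi> a) (\<phi> b) = \<phi> (br1 a b)"
    and hom_circ: "\<forall>a b. \<phi> (circ1 a b) = tcirc circ1 circ2 (\<phi> a) (\<phi> b)"
    and N: "N \<ge> 2"
  shows "(\<forall>i j. 2 \<le> i \<and> i \<le> N \<and> 2 \<le> j \<and> j \<le> N \<longrightarrow>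
            tbr circ1 br1 circ2 br2 (Cas \<phi> e2 C N i) (Cas \<phi> e2 C N j) = 0)
       \<and> (\<forall>a i. 2 \<le> i \<and> i \<le> N \<longrightarrow>
            tbr circ1 br1 circ2 br2 (phi_sup \<phi> N a) (Cas \<phi> e2 C N i) = 0)"
proof -
  have g: "gen_JL circ1 br1 e1 \<and> gen_JL circ2 br2 e2"
    using alg unfolding CJL_def QJL_def by (elim disjE conjE) (rule conjI; assumption)+
  have g1: "gen_JL circ1 br1 e1" using g by (rule conjunct1)
  have g2: "gen_JL circ2 br2 e2" using g by (rule conjunct2)
  have bl: "bilin circ1" "bilin br1" "bilin circ2" "bilin br2"
    using gJL_parts(1,2)[OF g1] gJL_parts(1,2)[OF g2] by auto
  interpret jl2 circ1 br1 circ2 br2 using bl by unfold_locales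
  have unit2: "\<And>y. circ2 e2 y = y" "\<And>y. circ2 y e2 = y"
    by (rule gJL_parts(3)[OF g2], rule gJL_parts(4)[OF g2])
  have anti1: "\<And>a b. br1 a b = - br1 b a" by (rule gJL_parts(5)[OF g1])
  have anti2: "\<And>a b. br2 a b = - br2 b a" by (rule gJL_parts(5)[OF g2])
  have leib: "\<And>a b c. br2 a (circ2 b c) = circ2 b (br2 a c) + circ2 (br2 a b) c"
    by (rule gJL_parts(6)[OF g2])
  have u3: "\<And>y. br2 y e2 = 0"
  proof -
    fix y
    have "br2 y (circ2 e2 e2) = circ2 e2 (br2 y e2) + circ2 (br2 y e2) e2" by (rule leib)
    then have "br2 y e2 = br2 y e2 + br2 y e2" by (simp add: unit2)
    then show "br2 y e2 = 0" by simp
  qed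
  have u4: "\<And>y. br2 e2 y = 0"
  proof -
    fix y show "br2 e2 y = 0" using anti2[of e2 y] u3[of y] by simp
  qed
  have cas1: "\<And>a. br1 a C = 0"
  proof -
    fix a show "br1 a C = 0" using anti1[of a C] casimir by simp
  qed
  interpret jl3 circ1 br1 circ2 br2 \<phi> e2 C
  proof (rule jl3.intro)
    show "jl2 circ1 br1 circ2 br2" by (rule jl2.intro) (fact bl)+
    show "jl3_axioms circ1 br1 circ2 br2 \<phi> e2 C"
      by (rule jl3_axioms.intro) (use lin range hom_br hom_circ unit2 u3 u4 cas1 casimir in simp_all)
  qed
  note M = main[of N]
  show ?thesis using M by assumption
qed

end
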